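(* Let $X$ be a compact metric space and $f\colon X\to X$ continuous. Suppose $\delta_1>0$, $\delta_2\ge 0$, $\chi\in(0,1)$ and $\tau\in\mathbb{N}$ are such that for every $(x_1,n_1),(x_2,n_2)\in X\times\mathbb{N}$ there exist $t\in\{0,1,\dots,\tau\}$ and $y\in X$ with \[ d(f^ky,f^kx_1)\le\delta_1\chi^{n_1-k}\ \text{for all } 0\le k<n_1,\qquad d_{n_2}(f^{n_1+t}y,x_2)\le\delta_2. \] Then $(X,f)$ has the specification property at scale $\delta_2+\delta_1/(1-\chi)$ with gap size $\tau$; that is, writing $\delta'=\delta_2+\delta_1/(1-\chi)$, for every finite collection $(x_1,n_1),\dots,(x_k,n_k)\in X\times\mathbb{N}$ there exist integers $0=T_1<T_2<\dots<T_k$ and $y\in X$ such that $f^{T_i}(y)\in B_{n_i}(x_i,\delta')$ for all $1\le i\le k$ and $T_i-(T_{i-1}+n_{i-1})\in[0,\tau]$ for all $2\le i\le k$.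
   Context: $d_n(x,y)=\max\{d(f^kx,f^ky):0\le k<n\}$ is the $n$th dynamical metric, and $B_n(x,\epsilon)=\{y\in X: d_n(x,y)<\epsilon\}$ is the Bowen ball. *)

theory Defs
  imports "HOL-Analysis.Analysis"
begin

text \<open>n-th dynamical metric d_n(x,y) = max{d(f^k x, f^k y) : 0 <= k < n} (used for n >= 1).\<close>
definition dyn_dist :: "('a::metric_space \<Rightarrow> 'a) \<Rightarrow> nat \<Rightarrow> 'a \<Rightarrow> 'a \<Rightarrow> real" where
  "dyn_dist f n x y = Max {dist ((f ^^ k) x) ((f ^^ k) y) | k. k < n}"

definition bowen_ball :: "('a::metric_space \<Rightarrow> 'a) \<Rightarrow> nat \<Rightarrow> 'a \<Rightarrow> real \<Rightarrow> 'a set" where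
  "bowen_ball f n x \<epsilon> = {y. dyn_dist f n x y < \<epsilon>}"

text \<open>Specification property at scale delta with gap size tau: for every finite collection
  (x_0,n_0),...,(x_{m-1},n_{m-1}) (indices shifted to start at 0, n_i positive integers)
  there are 0 = T_0 < T_1 < ... and y with f^{T_i} y in B_{n_i}(x_i,delta) and
  T_{i+1} - (T_i + n_i) in [0,tau].\<close>
definition has_specification :: "('a::metric_space \<Rightarrow> 'a) \<Rightarrow> real \<Rightarrow> nat \<Rightarrow> bool" where
  "has_specification f \<delta> \<tau> \<longleftrightarrow>
    (\<forall>(m::nat) (xs::nat \<Rightarrow> 'a) (ns::nat \<Rightarrow> nat). (\<forall>i<m. 1 \<le> ns i) \<longrightarrow>
      (\<exists>(T::nat \<Rightarrow> nat) y. T 0 = 0 \<and>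
         (\<forall>i. Suc i < m \<longrightarrow> T i < T (Suc i)) \<and>
         (\<forall>i<m. (f ^^ T i) y \<in> bowen_ball f (ns i) (xs i) \<delta>) \<and>
         (\<forall>i. Suc i < m \<longrightarrow> T i + ns i \<le> T (Suc i) \<and> T (Suc i) - (T i + ns i) \<le> \<tau>)))"

end

theory Submission
  imports Defs
begin

lemma dyn_set_eq: "{dist ((f ^^ k) x) ((f ^^ k) y) | k. k < n} = (\<lambda>k. dist ((f ^^ k) x) ((f ^^ k) y)) ` {..<n}"
  by auto

lemma dyn_dist_ge:
  assumes "k < n" shows "dist ((f ^^ k) x) ((f ^^ k) y) \<le> dyn_dist f n x y"
  unfolding dyn_dist_def dyn_set_eq using assms by (intro Max_ge) auto

lemma dyn_dist_lt:
  assumes "1 \<le> n" and "\<And>k. k < n \<Longrightarrow> dist ((f ^^ k) x) ((f ^^ k) y) < r"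
  shows "dyn_dist f n x y < r"
  unfolding dyn_dist_def dyn_set_eq using assms by (subst Max_less_iff) (auto simp: lessThan_empty_iff)

lemma funpow_comp_apply: "(f ^^ a) ((f ^^ b) y) = (f ^^ (b + a)) y"
  by (metis comp_apply funpow_add add.commute)

lemma g_props:
  fixes \<kappa> :: real
  assumes "0 < \<kappa>" "\<kappa> < 1"
  shows "1 \<le> e \<Longrightarrow> 0 \<le> (\<kappa> - \<kappa>^e) / (1 - \<kappa>)"
    and "e \<le> e' \<Longrightarrow> (\<kappa> - \<kappa>^e) / (1 - \<kappa>) \<le> (\<kappa> - \<kappa>^e') / (1 - \<kappa>)"
    and "(\<kappa> - \<kappa>^e) / (1 - \<kappa>) + \<kappa>^e = (\<kappa> - \<kappa>^(Suc e)) / (1 - \<kappa>)"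
    and "(\<kappa> - \<kappa>^e) / (1 - \<kappa>) < 1 / (1 - \<kappa>)"
proof -
  show "1 \<le> e \<Longrightarrow> 0 \<le> (\<kappa> - \<kappa>^e) / (1 - \<kappa>)"
    using assms power_decreasing[of 1 e \<kappa>] by simp
  show "e \<le> e' \<Longrightarrow> (\<kappa> - \<kappa>^e) / (1 - \<kappa>) \<le> (\<kappa> - \<kappa>^e') / (1 - \<kappa>)"
    using assms power_decreasing[of e e' \<kappa>] by (intro divide_right_mono) auto
  show "(\<kappa> - \<kappa>^e) / (1 - \<kappa>) + \<kappa>^e = (\<kappa> - \<kappa>^(Suc e)) / (1 - \<kappa>)"
    using assms by (simp add: field_simps)
  show "(\<kappa> - \<kappa>^e) / (1 - \<kappa>) < 1 / (1 - \<kappa>)"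
  proof -
    have "0 \<le> \<kappa>^e" using assms by simp
    then have "\<kappa> - \<kappa>^e < 1" using assms by linarith
    then show ?thesis using assms by (intro divide_strict_right_mono) auto
  qed
qed

lemma main_construction:
  fixes f :: "'a::metric_space \<Rightarrow> 'a"
    and d1 d2 \<kappa> :: real and \<tau> :: nat
  assumes "d1 > 0" and "d2 \<ge> 0" and k0: "0 < \<kappa>" and k1: "\<kappa> < 1"
    and H: "\<forall>x1 n1 x2 n2. 1 \<le> n1 \<longrightarrow> 1 \<le> n2 \<longrightarrow>
           (\<exists>t\<le>\<tau>. \<exists>y. (\<forall>k<n1. dist ((f ^^ k) y) ((f ^^ k) x1) \<le> d1 * \<kappa> ^ (n1 - k)) \<and>
                          dyn_dist f n2 ((f ^^ (n1 + t)) y) x2 \<le> d2)"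
  shows "1 \<le> m \<Longrightarrow> (\<forall>i<m. 1 \<le> ns i) \<Longrightarrow>
    \<exists>(T::nat \<Rightarrow> nat) y. T 0 = 0 \<and>
      (\<forall>i. Suc i < m \<longrightarrow> T i + ns i \<le> T (Suc i) \<and> T (Suc i) - (T i + ns i) \<le> \<tau>) \<and>
      (\<forall>i<m. T i + ns i \<le> T (m - 1) + ns (m - 1)) \<and>
      (\<forall>i<m. \<forall>k<ns i. dist ((f ^^ (T i + k)) y) ((f ^^ k) (xs i)) \<le>
          d2 + d1 * ((\<kappa> - \<kappa> ^ (T (m - 1) + ns (m - 1) - (T i + k))) / (1 - \<kappa>)))"
proof (induction m)
  case 0 then show ?case by simp
next
  case (Suc m)
  show ?case
  proof (cases "m = 0")
    case True
    have "dist ((f ^^ (0 + k)) (xs 0)) ((f ^^ k) (xs 0)) \<le>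
          d2 + d1 * ((\<kappa> - \<kappa> ^ (0 + ns 0 - (0 + k))) / (1 - \<kappa>))" if "k < ns 0" for k
    proof -
      have g0: "0 \<le> (\<kappa> - \<kappa> ^ (0 + ns 0 - (0 + k))) / (1 - \<kappa>)"
        using g_props(1)[OF k0 k1, of "0 + ns 0 - (0 + k)"] that by simp
      have d0: "0 \<le> d1" using assms(1) by simp
      have "0 \<le> d1 * ((\<kappa> - \<kappa> ^ (0 + ns 0 - (0 + k))) / (1 - \<kappa>))"
        by (rule mult_nonneg_nonneg[OF d0 g0])
      moreover have "dist ((f ^^ (0 + k)) (xs 0)) ((f ^^ k) (xs 0)) = 0" by simp
      ultimately show ?thesis using assms(2) by linarith
    qed
    note base = this
    show ?thesis
    proof (intro exI[of _ "\<lambda>_. 0"] exI[of _ "xs 0"] conjI allI impI)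
      fix i k assume i: "i < Suc m" and k: "k < ns i"
      from i True have i0: "i = 0" by simp
      show "dist ((f ^^ ((\<lambda>_. 0::nat) i + k)) (xs 0)) ((f ^^ k) (xs i)) \<le>
          d2 + d1 * ((\<kappa> - \<kappa> ^ ((\<lambda>_. 0::nat) (Suc m - 1) + ns (Suc m - 1) - ((\<lambda>_. 0::nat) i + k))) / (1 - \<kappa>))"
        using base[of k] k unfolding i0 True by simp
    next
      show "(\<lambda>_. 0::nat) 0 = 0" by (rule refl)
    next
      fix i assume "Suc i < Suc m"
      then have False using True by linarith
      then show "(\<lambda>_. 0::nat) i + ns i \<le> (\<lambda>_. 0::nat) (Suc i)" by (rule FalseE)
    next
      fix i assume "Suc i < Suc m"
      then have False using True by linarith
      then show "(\<lambda>_. 0::nat) (Suc i) - ((\<lambda>_. 0::nat) i + ns i) \<le> \<tau>" by (rule FalseE)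
    next
      fix i assume "i < Suc m"
      then have i0: "i = 0" using True by linarith
      show "(\<lambda>_. 0::nat) i + ns i \<le> (\<lambda>_. 0::nat) (Suc m - 1) + ns (Suc m - 1)"
        unfolding i0 True by simp
    qed
  next
    case False
    then have m1: "1 \<le> m" by simp
    have nsm: "\<forall>i<m. 1 \<le> ns i" using Suc.prems(2) by simp
    from Suc.IH[OF m1 nsm] obtain T y where
      T0: "T 0 = 0" and
      Tgap: "\<forall>i. Suc i < m \<longrightarrow> T i + ns i \<le> T (Suc i) \<and> T (Suc i) - (T i + ns i) \<le> \<tau>" and
      Tle: "\<forall>i<m. T i + ns i \<le> T (m - 1) + ns (m - 1)" and
      Td: "\<forall>i<m. \<forall>k<ns i. dist ((f ^^ (T i + k)) y) ((f ^^ k) (xs i)) \<le>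
          d2 + d1 * ((\<kappa> - \<kappa> ^ (T (m - 1) + ns (m - 1) - (T i + k))) / (1 - \<kappa>))"
      by (elim exE conjE) (rule that, assumption+)
    define N where "N = T (m - 1) + ns (m - 1)"
    have "1 \<le> ns (m - 1)" using Suc.prems(2) m1 by simp
    then have N1: "1 \<le> N" unfolding N_def by linarith
    have nm: "1 \<le> ns m" using Suc.prems(2) by simp
    from H[rule_format, OF N1 nm, of y "xs m"] obtain t y' where t: "t \<le> \<tau>"
      and sh: "\<forall>k<N. dist ((f ^^ k) y') ((f ^^ k) y) \<le> d1 * \<kappa> ^ (N - k)"
      and dd: "dyn_dist f (ns m) ((f ^^ (N + t)) y') (xs m) \<le> d2"
      by blast
    define T' where "T' = T(m := N + t)"
    have T'lt: "i < m \<Longrightarrow> T' i = T i" for i unfolding T'_def by simp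
    have T'm: "T' m = N + t" unfolding T'_def by simp
    define N' where "N' = N + t + ns m"
    have N'eq: "T' (Suc m - 1) + ns (Suc m - 1) = N'" using T'm N'_def by simp
    have gapT': "T' i + ns i \<le> T' (Suc i) \<and> T' (Suc i) - (T' i + ns i) \<le> \<tau>" if "Suc i < Suc m" for i
    proof -
      from that have i: "i < m" by simp
      show ?thesis
      proof (cases "Suc i < m")
        case True then show ?thesis using Tgap T'lt i by simp
      next
        case False
        then have "i = m - 1" "Suc i = m" using i by auto
        then show ?thesis using T'm T'lt i t N_def by simp
      qed
    qed
    show ?thesis
    proof (intro exI[of _ T'] exI[of _ y'] conjI allI impI)
      show "T' 0 = 0" using T0 T'lt m1 by simp
    next
      fix i assume "Suc i < Suc m"
      then show "T' i + ns i \<le> T' (Suc i)" using gapT' by blast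
    next
      fix i assume "Suc i < Suc m"
      then show "T' (Suc i) - (T' i + ns i) \<le> \<tau>" using gapT' by blast
    next
      fix i assume i: "i < Suc m"
      show "T' i + ns i \<le> T' (Suc m - 1) + ns (Suc m - 1)"
        unfolding N'eq
      proof (cases "i < m")
        case True then show "T' i + ns i \<le> N'" using Tle T'lt N_def N'_def by fastforce
      next
        case False then have "i = m" using i by simp
        then show "T' i + ns i \<le> N'" using T'm N'_def by simp
      qed
    next
      fix i k assume i: "i < Suc m" and k: "k < ns i"
      show "dist ((f ^^ (T' i + k)) y') ((f ^^ k) (xs i)) \<le>
          d2 + d1 * ((\<kappa> - \<kappa> ^ (T' (Suc m - 1) + ns (Suc m - 1) - (T' i + k))) / (1 - \<kappa>))"
      proof (cases "i < m")
        case True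
        define p where "p = T i + k"
        have pN: "p < N" using Tle True k p_def N_def by fastforce
        have "dist ((f ^^ p) y') ((f ^^ k) (xs i)) \<le>
              dist ((f ^^ p) y') ((f ^^ p) y) + dist ((f ^^ p) y) ((f ^^ k) (xs i))"
          by (rule dist_triangle)
        also have "\<dots> \<le> d1 * \<kappa> ^ (N - p) + (d2 + d1 * ((\<kappa> - \<kappa> ^ (N - p)) / (1 - \<kappa>)))"
          using sh pN Td True k unfolding p_def N_def by (intro add_mono) auto
        also have "\<dots> = d2 + d1 * ((\<kappa> - \<kappa> ^ (Suc (N - p))) / (1 - \<kappa>))"
        proof -
          have "d1 * ((\<kappa> - \<kappa> ^ (N - p)) / (1 - \<kappa>) + \<kappa> ^ (N - p)) =
                d1 * ((\<kappa> - \<kappa> ^ (Suc (N - p))) / (1 - \<kappa>))"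
            using g_props(3)[OF k0 k1, of "N - p"] by (rule arg_cong)
          then have "d1 * \<kappa> ^ (N - p) + d1 * ((\<kappa> - \<kappa> ^ (N - p)) / (1 - \<kappa>)) =
                d1 * ((\<kappa> - \<kappa> ^ (Suc (N - p))) / (1 - \<kappa>))"
            by (simp only: distrib_left add.commute)
          then show ?thesis by linarith
        qed
        also have "\<dots> \<le> d2 + d1 * ((\<kappa> - \<kappa> ^ (N' - p)) / (1 - \<kappa>))"
          using g_props(2)[OF k0 k1, of "Suc (N - p)" "N' - p"] pN nm assms(1) N'_def
          by (intro add_left_mono mult_left_mono) auto
        finally have X: "dist ((f ^^ p) y') ((f ^^ k) (xs i)) \<le> d2 + d1 * ((\<kappa> - \<kappa> ^ (N' - p)) / (1 - \<kappa>))" .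
        have "T' i = T i" using T'lt True by blast
        then show "dist ((f ^^ (T' i + k)) y') ((f ^^ k) (xs i)) \<le>
          d2 + d1 * ((\<kappa> - \<kappa> ^ (T' (Suc m - 1) + ns (Suc m - 1) - (T' i + k))) / (1 - \<kappa>))"
          using X N'eq p_def by simp
      next
        case False then have im: "i = m" using i by simp
        have "dist ((f ^^ k) ((f ^^ (N + t)) y')) ((f ^^ k) (xs m)) \<le> d2"
          using dyn_dist_ge[of k "ns m" f "(f ^^ (N + t)) y'" "xs m"] dd k im by simp
        then have "dist ((f ^^ (T' i + k)) y') ((f ^^ k) (xs i)) \<le> d2"
          using im T'm by (simp add: funpow_comp_apply)
        also have "\<dots> \<le> d2 + d1 * ((\<kappa> - \<kappa> ^ (N' - (T' i + k))) / (1 - \<kappa>))"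
        proof -
          have e1: "1 \<le> N' - (T' i + k)" using im T'm N'_def k by simp
          have "0 \<le> d1" using assms(1) by simp
          from mult_nonneg_nonneg[OF this g_props(1)[OF k0 k1 e1]]
          show ?thesis by linarith
        qed
        finally show ?thesis using N'eq by simp
      qed
    qed
  qed
qed

theorem lemma5p10:
  fixes f :: "'a::metric_space \<Rightarrow> 'a"
    and d1 d2 \<kappa> :: real and \<tau> :: nat
  assumes "compact (UNIV :: 'a set)"
    and "continuous_on UNIV f"
    and "d1 > 0" and "d2 \<ge> 0" and "0 < \<kappa>" and "\<kappa> < 1"
    and "\<forall>x1 n1 x2 n2. 1 \<le> n1 \<longrightarrow> 1 \<le> n2 \<longrightarrow>
           (\<exists>t\<le>\<tau>. \<exists>y. (\<forall>k<n1. dist ((f ^^ k) y) ((f ^^ k) x1) \<le> d1 * \<kappa> ^ (n1 - k)) \<and>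
                          dyn_dist f n2 ((f ^^ (n1 + t)) y) x2 \<le> d2)"
  shows "has_specification f (d2 + d1 / (1 - \<kappa>)) \<tau>"
  unfolding has_specification_def
proof (intro allI impI)
  fix m :: nat and xs :: "nat \<Rightarrow> 'a" and ns :: "nat \<Rightarrow> nat"
  assume ns: "\<forall>i<m. 1 \<le> ns i"
  show "\<exists>(T::nat \<Rightarrow> nat) y. T 0 = 0 \<and>
         (\<forall>i. Suc i < m \<longrightarrow> T i < T (Suc i)) \<and>
         (\<forall>i<m. (f ^^ T i) y \<in> bowen_ball f (ns i) (xs i) (d2 + d1 / (1 - \<kappa>))) \<and>
         (\<forall>i. Suc i < m \<longrightarrow> T i + ns i \<le> T (Suc i) \<and> T (Suc i) - (T i + ns i) \<le> \<tau>)"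
  proof (cases "m = 0")
    case True then show ?thesis by (intro exI[of _ "\<lambda>_. 0"]) auto
  next
    case False
    then have m1: "1 \<le> m" by simp
    from main_construction[OF assms(3-7) m1 ns, of xs] obtain T y where
      T0: "T 0 = 0" and
      Tgap: "\<forall>i. Suc i < m \<longrightarrow> T i + ns i \<le> T (Suc i) \<and> T (Suc i) - (T i + ns i) \<le> \<tau>" and
      Td: "\<forall>i<m. \<forall>k<ns i. dist ((f ^^ (T i + k)) y) ((f ^^ k) (xs i)) \<le>
          d2 + d1 * ((\<kappa> - \<kappa> ^ (T (m - 1) + ns (m - 1) - (T i + k))) / (1 - \<kappa>))"
      by blast
    show ?thesis
    proof (intro exI[of _ T] exI[of _ y] conjI allI impI)
      show "T 0 = 0" by (rule T0)
    next
      fix i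
      assume si: "Suc i < m"
      then have "T i + ns i \<le> T (Suc i)" using Tgap by blast
      moreover have "1 \<le> ns i" using ns si by simp
      ultimately show "T i < T (Suc i)" by linarith
    next
      fix i assume "Suc i < m"
      then show "T i + ns i \<le> T (Suc i)" using Tgap by blast
    next
      fix i assume "Suc i < m"
      then show "T (Suc i) - (T i + ns i) \<le> \<tau>" using Tgap by blast
    next
      fix i assume i: "i < m"
      show "(f ^^ T i) y \<in> bowen_ball f (ns i) (xs i) (d2 + d1 / (1 - \<kappa>))"
        unfolding bowen_ball_def mem_Collect_eq
      proof (rule dyn_dist_lt)
        show "1 \<le> ns i" using ns i by simp
      next
        fix k assume k: "k < ns i"
        let ?e = "T (m - 1) + ns (m - 1) - (T i + k)"
        have "dist ((f ^^ k) (xs i)) ((f ^^ k) ((f ^^ T i) y)) = dist ((f ^^ (T i + k)) y) ((f ^^ k) (xs i))"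
          by (simp add: funpow_comp_apply dist_commute)
        also have "\<dots> \<le> d2 + d1 * ((\<kappa> - \<kappa> ^ ?e) / (1 - \<kappa>))" using Td i k by blast
        also have "\<dots> < d2 + d1 * (1 / (1 - \<kappa>))"
        proof -
          have "d1 * ((\<kappa> - \<kappa> ^ ?e) / (1 - \<kappa>)) < d1 * (1 / (1 - \<kappa>))"
            by (rule mult_strict_left_mono[OF g_props(4)[OF assms(5,6)] assms(3)])
          then show ?thesis by linarith
        qed
        also have "d2 + d1 * (1 / (1 - \<kappa>)) = d2 + d1 / (1 - \<kappa>)"
          by (simp only: times_divide_eq_right mult_1_right)
        finally show "dist ((f ^^ k) (xs i)) ((f ^^ k) ((f ^^ T i) y)) < d2 + d1 / (1 - \<kappa>)" .
      qed
    qed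
  qed
qed

end
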